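(* Let $n\ge 2$, let $\alpha_1,\dots,\alpha_n\in\mathbb C$, and let $T\in\mathcal L(\mathcal P_n)$ be $T=I+\alpha_1D+\alpha_2D^2+\cdots+\alpha_nD^n$. Then $\alpha_1=0$ if and only if there exists a constant $\Gamma_T>0$ such that for every $f\in\mathcal P_n$ of degree at least $2$ with simple roots, $$\tau(f)\,R_T(f)<\Gamma_T .$$
   Context: $\mathcal P_n$ is the complex vector space of polynomials of degree at most $n$, $\mathcal L(\mathcal P_n)$ the linear operators on it, $D$ the differentiation operator and $I$ the identity. For a nonzero polynomial $f$, $Z(f)$ is its set of roots. For a nonconstant $f\in\mathcal P_n$, $R_T(f):=\max_{w\in Z(Tf)}\min_{x\in Z(f)}|w-x|$ (equivalently, the least $r\ge0$ with $Z(Tf)\subset Z(f)+\mathbb D(r)$, where $\mathbb D(r)=\{z:|z|\le r\}$ and $A+B=\{u+v:u\in A,v\in B\}$). For a polynomial $f$ of degree at least $2$ with at least two distinct roots, $\tau(f):=\min\{|w-v|: w\in Z(f),\ v\in Z(f')\setminus\{w\}\}$. "Simple roots" means all roots have multiplicity one. *)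

theory Defs
  imports "HOL-Computational_Algebra.Polynomial" Complex_Main
begin

definition zeros :: "complex poly \<Rightarrow> complex set" where
  "zeros p = {x. poly p x = 0}"

definition Top :: "nat \<Rightarrow> (nat \<Rightarrow> complex) \<Rightarrow> complex poly \<Rightarrow> complex poly" where
  "Top n \<alpha> f = f + (\<Sum>k = 1..n. smult (\<alpha> k) ((pderiv ^^ k) f))"

definition R_T :: "nat \<Rightarrow> (nat \<Rightarrow> complex) \<Rightarrow> complex poly \<Rightarrow> real" where
  "R_T n \<alpha> f = Max ((\<lambda>w. Min ((\<lambda>x. cmod (w - x)) ` zeros f)) ` zeros (Top n \<alpha> f))"

definition tau :: "complex poly \<Rightarrow> real" where
  "tau f = Min {cmod (w - v) | w v. w \<in> zeros f \<and> v \<in> zeros (pderiv f) \<and> v \<noteq> w}"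

end

theory Submission
  imports Defs "HOL-Computational_Algebra.Fundamental_Theorem_Algebra"
begin


lemma pderiv_funpow_smult: "(pderiv^^k) (smult c q) = smult c ((pderiv^^k) q)"
  by (induction k) (auto simp: pderiv_smult)

lemma pderiv_funpow_lin:
  "(pderiv^^(Suc j)) ([:-a,1:] * q) = [:-a,1:] * (pderiv^^(Suc j)) q + smult (of_nat (Suc j)) ((pderiv^^j) q)"
proof (induction j)
  case 0
  have "pderiv ([:-a,1:] * q) = [:-a,1:] * pderiv q + pderiv [:-a,1:] * q" by (metis pderiv_mult mult.commute)
  then show ?case by (simp add: pderiv_pCons)
next
  case (Suc j)
  have "(pderiv^^(Suc (Suc j))) ([:-a,1:] * q) = pderiv ((pderiv^^(Suc j)) ([:-a,1:] * q))" by simp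
  also have "\<dots> = pderiv ([:-a,1:] * (pderiv^^(Suc j)) q + smult (of_nat (Suc j)) ((pderiv^^j) q))"
    using Suc by simp
  also have "\<dots> = [:-a,1:] * (pderiv^^(Suc (Suc j))) q + smult (of_nat (Suc (Suc j))) ((pderiv^^(Suc j)) q)"
    by (simp add: pderiv_mult pderiv_add pderiv_smult pderiv_pCons algebra_simps smult_add_left)
  finally show ?case .
qed

lemma nat_pow_ineq: "(N::nat)^(Suc j) + Suc j * N^j \<le> (N+1)^(Suc j)"
proof (induction j)
  case 0 then show ?case by simp
next
  case (Suc j)
  have "(N+1)^(Suc (Suc j)) = (N+1) * (N+1)^(Suc j)" by (rule power_Suc)
  also have "\<dots> \<ge> (N+1) * (N^(Suc j) + Suc j * N^j)" using Suc by (rule mult_le_mono2)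
  finally have "(N+1) * (N^(Suc j) + Suc j * N^j) \<le> (N+1)^(Suc (Suc j))" .
  moreover have "N^(Suc (Suc j)) + Suc (Suc j) * N^(Suc j) \<le> (N+1) * (N^(Suc j) + Suc j * N^j)"
    by (simp add: algebra_simps)
  ultimately show ?case by linarith
qed

lemma deriv_bound_mset:
  fixes M :: "complex multiset" and d :: real
  assumes "d \<ge> 0" "\<forall>x\<in>#M. cmod (w - x) \<ge> d"
  shows "cmod (poly ((pderiv^^k) (\<Prod>x\<in>#M. [:-x,1:])) w) * d^k
          \<le> real (size M)^k * cmod (poly (\<Prod>x\<in>#M. [:-x,1:]) w)"
  using assms(2)
proof (induction M arbitrary: k)
  case empty
  then show ?case
  proof (cases k)
    case (Suc j)
    have "(pderiv^^(Suc j)) (1::complex poly) = 0" by (induction j) auto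
    then show ?thesis using Suc by simp
  qed simp
next
  case (add a M)
  define Q where "Q = (\<Prod>x\<in>#M. [:-x,1:])"
  have IH: "\<And>k. cmod (poly ((pderiv^^k) Q) w) * d^k \<le> real (size M)^k * cmod (poly Q w)"
    using add unfolding Q_def by auto
  have da: "cmod (w - a) \<ge> d" using add by auto
  have P: "(\<Prod>x\<in>#add_mset a M. [:-x,1:]) = [:-a,1:] * Q" by (simp add: Q_def)
  show ?case
  proof (cases k)
    case 0 then show ?thesis by simp
  next
    case (Suc j)
    let ?N = "real (size M)"
    have "poly ((pderiv^^k) ([:-a,1:] * Q)) w = (w - a) * poly ((pderiv^^(Suc j)) Q) w + of_nat (Suc j) * poly ((pderiv^^j) Q) w"
      unfolding Suc pderiv_funpow_lin by (simp add: algebra_simps)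
    hence "cmod (poly ((pderiv^^k) ([:-a,1:] * Q)) w) * d^k \<le>
       (cmod (w - a) * cmod (poly ((pderiv^^(Suc j)) Q) w) + real (Suc j) * cmod (poly ((pderiv^^j) Q) w)) * d^k"
      by (metis (no_types, lifting) assms(1) mult_right_mono norm_mult norm_of_nat norm_triangle_ineq zero_le_power)
    also have "\<dots> = cmod (w - a) * (cmod (poly ((pderiv^^(Suc j)) Q) w) * d^(Suc j)) + real (Suc j) * (cmod (poly ((pderiv^^j) Q) w) * d^j) * d"
      by (simp add: Suc algebra_simps)
    also have "\<dots> \<le> cmod (w - a) * (?N^(Suc j) * cmod (poly Q w)) + real (Suc j) * (?N^j * cmod (poly Q w)) * cmod (w-a)"
      by (intro add_mono mult_mono IH da mult_left_mono) (auto simp: assms(1))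
    also have "\<dots> = (?N^(Suc j) + real (Suc j) * ?N^j) * (cmod (w-a) * cmod (poly Q w))"
      by (simp add: algebra_simps)
    also have "\<dots> \<le> (?N + 1)^(Suc j) * (cmod (w-a) * cmod (poly Q w))"
    proof (rule mult_right_mono)
      have "real (size M ^ Suc j + Suc j * size M ^ j) \<le> real ((size M + 1)^(Suc j))"
        using nat_pow_ineq by (simp only: of_nat_le_iff)
      then show "?N^(Suc j) + real (Suc j) * ?N^j \<le> (?N + 1)^(Suc j)" by (simp only: of_nat_add of_nat_mult of_nat_power of_nat_1)
    qed simp
    finally have X: "cmod (poly ((pderiv^^k) ([:-a,1:] * Q)) w) * d^k \<le> (?N + 1)^k * (cmod (w-a) * cmod (poly Q w))"
      using Suc by simp
    have Y: "cmod (poly ([:-a,1:]*Q) w) = cmod (w-a) * cmod (poly Q w)"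
      by (simp add: norm_mult[symmetric] algebra_simps)
    have Z: "real (size (add_mset a M)) = ?N + 1" by simp
    show ?thesis unfolding P Y Z using X .
  qed
qed

lemma deriv_bound:
  fixes p :: "complex poly" and d :: real
  assumes "p \<noteq> 0" "d \<ge> 0" "\<And>x. poly p x = 0 \<Longrightarrow> cmod (w - x) \<ge> d"
  shows "cmod (poly ((pderiv^^k) p) w) * d^k \<le> real (degree p)^k * cmod (poly p w)"
proof -
  let ?M = "proots p"
  have M: "\<forall>x\<in>#?M. cmod (w - x) \<ge> d" using assms by auto
  have e: "p = smult (lead_coeff p) (\<Prod>x\<in>#?M. [:-x,1:])"
    by (rule complex_poly_decompose_multiset[symmetric])
  have "cmod (poly ((pderiv^^k) p) w) * d^k = cmod (lead_coeff p) * (cmod (poly ((pderiv^^k) (\<Prod>x\<in>#?M. [:-x,1:])) w) * d^k)"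
    by (subst e, simp add: pderiv_funpow_smult norm_mult)
  also have "\<dots> \<le> cmod (lead_coeff p) * (real (size ?M)^k * cmod (poly (\<Prod>x\<in>#?M. [:-x,1:]) w))"
    by (intro mult_left_mono deriv_bound_mset M assms) auto
  also have "\<dots> = real (degree p)^k * cmod (poly p w)"
    by (subst (2) e) (simp add: size_proots_complex norm_mult)
  finally show ?thesis .
qed




lemma degree_pderiv_funpow: "degree ((pderiv^^k) (f::complex poly)) = degree f - k"
  by (induction k) (auto simp: degree_pderiv)

lemma coeff_Top: "degree f \<ge> 1 \<Longrightarrow> coeff (Top n \<alpha> (f::complex poly)) (degree f) = lead_coeff f"
proof -
  assume "degree f \<ge> 1"
  have "\<And>k. k \<in> {1..n} \<Longrightarrow> coeff ((pderiv^^k) f) (degree f) = 0"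
    by (rule coeff_eq_0) (use \<open>degree f \<ge> 1\<close> in \<open>auto simp: degree_pderiv_funpow\<close>)
  then show ?thesis unfolding Top_def by (simp add: coeff_sum)
qed

lemma poly_Top: "poly (Top n \<alpha> f) w = poly f w + (\<Sum>k=1..n. \<alpha> k * poly ((pderiv^^k) f) w)"
  unfolding Top_def by (simp add: poly_sum)

lemma has_root: "degree (p::complex poly) \<ge> 1 \<Longrightarrow> \<exists>z. poly p z = 0"
  using fundamental_theorem_of_algebra constant_degree by force

lemma Top_props:
  assumes "degree (f::complex poly) \<ge> 1"
  shows "Top n \<alpha> f \<noteq> 0" "finite (zeros (Top n \<alpha> f))" "zeros (Top n \<alpha> f) \<noteq> {}"
proof -
  have c: "coeff (Top n \<alpha> f) (degree f) \<noteq> 0" using coeff_Top[OF assms] assms by auto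
  then show nz: "Top n \<alpha> f \<noteq> 0" by auto
  show "finite (zeros (Top n \<alpha> f))" unfolding zeros_def using poly_roots_finite[OF nz] .
  have "degree (Top n \<alpha> f) \<ge> 1" using le_degree[OF c] assms by linarith
  then show "zeros (Top n \<alpha> f) \<noteq> {}" using has_root unfolding zeros_def by auto
qed

lemma zeros_props:
  assumes "degree (f::complex poly) \<ge> 1"
  shows "finite (zeros f)" "zeros f \<noteq> {}"
proof -
  have "f \<noteq> 0" using assms by auto
  then show "finite (zeros f)" unfolding zeros_def using poly_roots_finite by auto
  show "zeros f \<noteq> {}" using has_root[OF assms] unfolding zeros_def by auto
qed

lemma tau_props:
  assumes "degree (f::complex poly) \<ge> 2" "rsquarefree f"
  shows "tau f > 0" "\<And>x v. poly f x = 0 \<Longrightarrow> poly (pderiv f) v = 0 \<Longrightarrow> tau f \<le> cmod (x - v)"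
proof -
  let ?S = "{cmod (w - v) | w v. w \<in> zeros f \<and> v \<in> zeros (pderiv f) \<and> v \<noteq> w}"
  have d1: "degree (pderiv f) \<ge> 1" using assms by (simp add: degree_pderiv)
  have fz: "finite (zeros f)" "zeros f \<noteq> {}" using zeros_props[of f] assms by auto
  have fz': "finite (zeros (pderiv f))" "zeros (pderiv f) \<noteq> {}" using zeros_props[OF d1] by auto
  have ne: "\<And>x v. poly f x = 0 \<Longrightarrow> poly (pderiv f) v = 0 \<Longrightarrow> v \<noteq> x"
    using assms(2) rsquarefree_roots by metis
  have fin: "finite ?S"
  proof (rule finite_subset)
    show "?S \<subseteq> (\<lambda>(w,v). cmod (w - v)) ` (zeros f \<times> zeros (pderiv f))" by auto
    show "finite ((\<lambda>(w,v). cmod (w - v)) ` (zeros f \<times> zeros (pderiv f)))" using fz fz' by auto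
  qed
  obtain x0 v0 where "x0 \<in> zeros f" "v0 \<in> zeros (pderiv f)" using fz fz' by blast
  then have nemp: "?S \<noteq> {}" using ne unfolding zeros_def by blast
  have "Min ?S \<in> ?S" using Min_in[OF fin nemp] .
  then show "tau f > 0" unfolding tau_def by auto
  fix x v assume "poly f x = 0" "poly (pderiv f) v = 0"
  then have "cmod (x - v) \<in> ?S" using ne unfolding zeros_def by blast
  then show "tau f \<le> cmod (x - v)" unfolding tau_def using Min_le[OF fin] by blast
qed




lemma core_bound:
  fixes f :: "complex poly" and \<alpha> :: "nat \<Rightarrow> complex" and n :: nat
  defines "A \<equiv> (\<Sum>k=1..n. cmod (\<alpha> k) * real n ^ k)"
  defines "B \<equiv> (\<Sum>k=1..n. cmod (\<alpha> k) * (2 * real n) ^ (k - 1))"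
  defines "D0 \<equiv> max 1 A"
  assumes a1: "\<alpha> 1 = 0" and deg: "2 \<le> degree f" "degree f \<le> n" and sq: "rsquarefree f"
    and Tw: "poly (Top n \<alpha> f) w = 0" and x0: "poly f x0 = 0"
    and x0min: "\<And>x. poly f x = 0 \<Longrightarrow> cmod (w - x0) \<le> cmod (w - x)"
  shows "tau f * cmod (w - x0) \<le> 2 * D0^2 + D0 + real n * B"
proof -
  define d where "d = cmod (w - x0)"
  define t where "t = tau f"
  have t0: "t > 0" and tle: "\<And>x v. poly f x = 0 \<Longrightarrow> poly (pderiv f) v = 0 \<Longrightarrow> t \<le> cmod (x - v)"
    using tau_props[OF deg(1) sq] unfolding t_def by auto
  have fnz: "f \<noteq> 0" using deg by auto
  have A0: "A \<ge> 0" unfolding A_def by (intro sum_nonneg) auto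
  have B0: "B \<ge> 0" unfolding B_def by (intro sum_nonneg) auto
  have D01: "D0 \<ge> 1" unfolding D0_def by auto
  have d0: "d \<ge> 0" unfolding d_def by auto
  have nB: "real n * B \<ge> 0" using B0 by simp
  have DD: "D0 * D0 \<ge> 0" using D01 by simp
  have G0: "0 \<le> 2 * D0^2 + D0 + real n * B" using D01 B0 by auto
  have feq: "poly f w = - (\<Sum>k=1..n. \<alpha> k * poly ((pderiv^^k) f) w)"
    using Tw unfolding poly_Top by (simp add: add_eq_0_iff)
  have fle: "cmod (poly f w) \<le> (\<Sum>k=1..n. cmod (\<alpha> k) * cmod (poly ((pderiv^^k) f) w))"
    unfolding feq norm_minus_cancel
    by (rule order_trans[OF norm_sum]) (simp add: norm_mult)
  have dist: "\<And>x. poly f x = 0 \<Longrightarrow> cmod (w - x) \<ge> d" using x0min unfolding d_def by auto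
  have DB: "\<And>k. cmod (poly ((pderiv^^k) f) w) * d^k \<le> real n ^ k * cmod (poly f w)"
  proof -
    fix k
    have "cmod (poly ((pderiv^^k) f) w) * d^k \<le> real (degree f) ^ k * cmod (poly f w)"
      by (rule deriv_bound[OF fnz d0 dist])
    also have "\<dots> \<le> real n ^ k * cmod (poly f w)"
      using deg by (intro mult_right_mono power_mono) auto
    finally show "cmod (poly ((pderiv^^k) f) w) * d^k \<le> real n ^ k * cmod (poly f w)" .
  qed
  show ?thesis
  proof (cases "poly f w = 0")
    case True
    then have "d = 0" using dist[OF True] d0 by auto
    then show ?thesis using G0 unfolding d_def t_def by simp
  next
    case fw: False
    have dD: "d \<le> D0"
    proof (cases "d \<le> 1")
      case True then show ?thesis unfolding D0_def by auto
    next
      case False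
      have "d * cmod (poly f w) \<le> (\<Sum>k=1..n. cmod (\<alpha> k) * (cmod (poly ((pderiv^^k) f) w) * d))"
        using mult_left_mono[OF fle d0] by (simp add: sum_distrib_left algebra_simps)
      also have "\<dots> \<le> (\<Sum>k=1..n. cmod (\<alpha> k) * (real n ^ k * cmod (poly f w)))"
      proof (intro sum_mono mult_left_mono)
        fix k assume k: "k \<in> {1..n}"
        have "d \<le> d^k" using False k by (intro power_increasing[where n=1, simplified]) auto
        then have "cmod (poly ((pderiv^^k) f) w) * d \<le> cmod (poly ((pderiv^^k) f) w) * d^k"
          by (intro mult_left_mono) auto
        then show "cmod (poly ((pderiv^^k) f) w) * d \<le> real n ^ k * cmod (poly f w)"
          using DB[of k] by linarith
      qed auto
      also have "\<dots> = A * cmod (poly f w)" unfolding A_def by (simp add: sum_distrib_left mult_ac)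
      finally have "d * cmod (poly f w) \<le> A * cmod (poly f w)" .
      then have "d \<le> A" using fw by auto
      then show ?thesis unfolding D0_def by auto
    qed
    show ?thesis
    proof (cases "\<exists>v. poly (pderiv f) v = 0 \<and> cmod (w - v) < t/2")
      case True
      then obtain v where v: "poly (pderiv f) v = 0" "cmod (w - v) < t/2" by blast
      have "t \<le> cmod (x0 - v)" using tle[OF x0 v(1)] .
      also have "\<dots> \<le> cmod (x0 - w) + cmod (w - v)" using norm_triangle_ineq[of "x0 - w" "w - v"] by simp
      also have "cmod (x0 - w) = d" unfolding d_def by (simp add: norm_minus_commute)
      finally have "t < 2 * d" using v by linarith
      then have "t * d \<le> 2 * d * d" using d0 by (intro mult_right_mono) auto
      also have "\<dots> \<le> 2 * D0 * D0" using dD d0 by (intro mult_mono) auto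
      finally show ?thesis using D01 nB DD unfolding d_def t_def power2_eq_square by linarith
    next
      case far: False
      show ?thesis
      proof (cases "t < 1")
        case True
        then have "t * d \<le> d" using d0 t0 by (simp add: mult_left_le_one_le)
        then show ?thesis using dD D01 nB DD unfolding d_def t_def power2_eq_square by linarith
      next
        case t1: False
        have f'w: "poly (pderiv f) w \<noteq> 0" using far t0 by auto
        have f'nz: "pderiv f \<noteq> 0" using f'w by auto
        have dist': "\<And>v. poly (pderiv f) v = 0 \<Longrightarrow> cmod (w - v) \<ge> t/2" using far by force
        have kb: "cmod (\<alpha> k) * (t * cmod (poly ((pderiv^^k) f) w)) \<le> cmod (\<alpha> k) * ((2 * real n)^(k-1) * cmod (poly (pderiv f) w))"
          if k: "k \<in> {1..n}" for k
        proof (cases "k = 1")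
          case True then show ?thesis using a1 by simp
        next
          case False
          then obtain j where j: "k = Suc j" "j \<ge> 1" using k by (cases k) auto
          have e: "(pderiv^^k) f = (pderiv^^j) (pderiv f)" using j by (simp add: funpow_Suc_right del: funpow.simps)
          have "cmod (poly ((pderiv^^j) (pderiv f)) w) * (t/2)^j \<le> real (degree (pderiv f))^j * cmod (poly (pderiv f) w)"
            by (rule deriv_bound[OF f'nz _ dist']) (use t0 in auto)
          also have "\<dots> \<le> real n ^ j * cmod (poly (pderiv f) w)"
            using deg by (intro mult_right_mono power_mono) (auto simp: degree_pderiv)
          finally have h: "cmod (poly ((pderiv^^k) f) w) * (t/2)^j \<le> real n ^ j * cmod (poly (pderiv f) w)"
            unfolding e .
          have "t \<le> t^j" using t1 j by (intro power_increasing[where n=1, simplified]) auto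
          then have "t * cmod (poly ((pderiv^^k) f) w) \<le> t^j * cmod (poly ((pderiv^^k) f) w)"
            by (intro mult_right_mono) auto
          also have "\<dots> = 2^j * (cmod (poly ((pderiv^^k) f) w) * (t/2)^j)"
            by (simp add: power_divide)
          also have "\<dots> \<le> 2^j * (real n ^ j * cmod (poly (pderiv f) w))"
            using h by (intro mult_left_mono) auto
          also have "\<dots> = (2 * real n)^(k-1) * cmod (poly (pderiv f) w)"
            using j by (simp add: power_mult_distrib)
          finally show ?thesis by (intro mult_left_mono) auto
        qed
        have "t * cmod (poly f w) \<le> (\<Sum>k=1..n. cmod (\<alpha> k) * (t * cmod (poly ((pderiv^^k) f) w)))"
          using mult_left_mono[OF fle] t0 by (simp add: sum_distrib_left algebra_simps)
        also have "\<dots> \<le> (\<Sum>k=1..n. cmod (\<alpha> k) * ((2 * real n)^(k-1) * cmod (poly (pderiv f) w)))"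
          by (intro sum_mono kb)
        also have "\<dots> = B * cmod (poly (pderiv f) w)"
          unfolding B_def by (simp add: sum_distrib_left mult_ac)
        finally have tf: "t * cmod (poly f w) \<le> B * cmod (poly (pderiv f) w)" .
        have "cmod (poly ((pderiv^^1) f) w) * d^1 \<le> real n ^ 1 * cmod (poly f w)" by (rule DB)
        then have df: "d * cmod (poly (pderiv f) w) \<le> real n * cmod (poly f w)" by (simp add: mult.commute)
        have "(t * d) * cmod (poly (pderiv f) w) = t * (d * cmod (poly (pderiv f) w))" by simp
        also have "\<dots> \<le> t * (real n * cmod (poly f w))" using df t0 by (intro mult_left_mono) auto
        also have "\<dots> = real n * (t * cmod (poly f w))" by simp
        also have "\<dots> \<le> real n * (B * cmod (poly (pderiv f) w))" using tf by (intro mult_left_mono) auto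
        finally have "(t * d) * cmod (poly (pderiv f) w) \<le> (real n * B) * cmod (poly (pderiv f) w)" by simp
        then have "t * d \<le> real n * B" using f'w by auto
        then show ?thesis using D01 nB DD unfolding d_def t_def power2_eq_square by linarith
      qed
    qed
  qed
qed




lemma pderiv_funpow_zero: "(pderiv^^j) (0::complex poly) = 0"
  by (induction j) auto

lemma counter:
  fixes \<alpha> :: "nat \<Rightarrow> complex" and n :: nat and \<Gamma> :: real
  assumes a1: "\<alpha> 1 \<noteq> 0" and n2: "n \<ge> 2" and G: "\<Gamma> > 0"
  shows "\<exists>f::complex poly. degree f \<le> n \<and> degree f \<ge> 2 \<and> rsquarefree f \<and> \<Gamma> \<le> tau f * R_T n \<alpha> f"
proof -
  define a where "a = cmod (\<alpha> 1)"
  define b where "b = cmod (\<alpha> 2)"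
  have a0: "a > 0" using a1 unfolding a_def by auto
  have b0: "b \<ge> 0" unfolding b_def by auto
  define s where "s = 4*a + 4*b + 4 + (3*\<Gamma> + 2*b)/a"
  have sa: "(3*\<Gamma> + 2*b)/a \<ge> 0" using G b0 a0 by auto
  have s1: "s \<ge> 4*a + 4*b + 4" unfolding s_def using sa by linarith
  have s0: "s > 0" using s1 a0 b0 by linarith
  have sG: "a * s \<ge> 3*\<Gamma> + 2*b"
  proof -
    have "s \<ge> (3*\<Gamma> + 2*b)/a" unfolding s_def using a0 b0 by simp
    then show ?thesis using a0 by (simp add: divide_le_eq mult.commute)
  qed
  define c where "c = complex_of_real s"
  have cs: "cmod c = s" unfolding c_def using s0 by simp
  define f where "f = [:-(c^2), 0, 1:]"
  have degf: "degree f = 2" unfolding f_def by simp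
  have pf: "\<And>z. poly f z = z^2 - c^2" unfolding f_def by (simp add: power2_eq_square algebra_simps)
  have pdf: "pderiv f = [:0, 2:]" unfolding f_def by (simp add: pderiv_pCons)
  have ppf: "\<And>z. poly (pderiv f) z = 2 * z" unfolding pdf by simp
  have c0: "c \<noteq> 0" unfolding c_def using s0 by simp
  have rootf: "\<And>z. poly f z = 0 \<longleftrightarrow> z = c \<or> z = -c"
  proof -
    fix z
    have "poly f z = (z - c) * (z + c)" unfolding pf by (simp add: power2_eq_square algebra_simps)
    then show "poly f z = 0 \<longleftrightarrow> z = c \<or> z = -c" by (auto simp: add_eq_0_iff)
  qed
  have zf: "zeros f = {c, -c}" unfolding zeros_def using rootf by auto
  have sqf: "rsquarefree f" unfolding rsquarefree_roots using rootf ppf c0 by auto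
  have zpf: "zeros (pderiv f) = {0}" unfolding zeros_def ppf by auto
  have tau: "tau f = s"
  proof -
    have "{cmod (w - v) | w v. w \<in> zeros f \<and> v \<in> zeros (pderiv f) \<and> v \<noteq> w} = {s}"
      unfolding zf zpf using cs c0 by auto
    then show ?thesis unfolding tau_def by simp
  qed
  have d3: "\<And>k. k \<ge> 3 \<Longrightarrow> (pderiv^^k) f = 0"
  proof -
    fix k :: nat assume "k \<ge> 3"
    then obtain j where "k = j + 3" by (metis add.commute le_Suc_ex)
    have "(pderiv^^3) f = 0" unfolding f_def by (simp add: numeral_3_eq_3 pderiv_pCons)
    then show "(pderiv^^k) f = 0" using \<open>k = j + 3\<close> by (simp add: funpow_add pderiv_funpow_zero)
  qed
  have pT: "\<And>z. poly (Top n \<alpha> f) z = z^2 - c^2 + \<alpha> 1 * (2*z) + \<alpha> 2 * 2"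
  proof -
    fix z
    have "(\<Sum>k=1..n. \<alpha> k * poly ((pderiv^^k) f) z) = (\<Sum>k\<in>{1,2}. \<alpha> k * poly ((pderiv^^k) f) z)"
      by (rule sum.mono_neutral_right) (use n2 d3 in auto)
    also have "\<dots> = \<alpha> 1 * (2*z) + \<alpha> 2 * 2"
      by (simp add: ppf numeral_2_eq_2 pdf pderiv_pCons)
    finally show "poly (Top n \<alpha> f) z = z^2 - c^2 + \<alpha> 1 * (2*z) + \<alpha> 2 * 2"
      unfolding poly_Top pf by simp
  qed
  have deg1: "degree f \<ge> 1" using degf by simp
  obtain w where w: "w \<in> zeros (Top n \<alpha> f)" using Top_props(3)[OF deg1] by blast
  have weq: "(w - c) * (w + c) = - (2 * \<alpha> 1 * w + 2 * \<alpha> 2)"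
    using w pT unfolding zeros_def by (simp add: power2_eq_square algebra_simps add_eq_0_iff)
  define r where "r = cmod w"
  have r0: "r \<ge> 0" unfolding r_def by simp
  have Pup: "cmod ((w - c) * (w + c)) \<le> 2*a*r + 2*b"
  proof -
    have "cmod ((w - c) * (w + c)) = cmod (2 * \<alpha> 1 * w + 2 * \<alpha> 2)" unfolding weq norm_minus_cancel ..
    also have "\<dots> \<le> cmod (2 * \<alpha> 1 * w) + cmod (2 * \<alpha> 2)" by (rule norm_triangle_ineq)
    also have "\<dots> = 2*a*r + 2*b" unfolding a_def b_def r_def by (simp add: norm_mult)
    finally show ?thesis .
  qed
  have Plo: "cmod ((w - c) * (w + c)) \<ge> 2*a*r - 2*b"
  proof -
    have "cmod ((w - c) * (w + c)) = cmod (2 * \<alpha> 1 * w + 2 * \<alpha> 2)" unfolding weq norm_minus_cancel ..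
    also have "\<dots> \<ge> cmod (2 * \<alpha> 1 * w) - cmod (2 * \<alpha> 2)" by (rule norm_diff_ineq)
    also have "cmod (2 * \<alpha> 1 * w) - cmod (2 * \<alpha> 2) = 2*a*r - 2*b" unfolding a_def b_def r_def by (simp add: norm_mult)
    finally show ?thesis .
  qed
  have wc2: "cmod ((w - c) * (w + c)) = cmod (w^2 - c^2)" by (simp add: power2_eq_square algebra_simps)
  have rlo: "r \<ge> s/2"
  proof (rule ccontr)
    assume "\<not> r \<ge> s/2"
    then have rl: "r < s/2" by simp
    have "s^2 = cmod (c^2)" using cs by (simp add: norm_power)
    also have "\<dots> \<le> cmod (w^2 - c^2) + cmod (w^2)" using norm_triangle_ineq[of "c^2 - w^2" "w^2"] by (simp add: norm_minus_commute)
    finally have "s^2 - r^2 \<le> cmod (w^2 - c^2)" unfolding r_def by (simp add: norm_power)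
    moreover have "r^2 < s^2/4"
    proof -
      have "r^2 < (s/2)^2" using rl r0 by (intro power_strict_mono) auto
      then show ?thesis by (simp add: power_divide)
    qed
    ultimately have A: "3*s^2/4 < cmod (w^2 - c^2)" by linarith
    have "a*(2*r) \<le> a*s" using rl a0 by (intro mult_left_mono) auto
    then have "2*a*r + 2*b \<le> a*s + 2*b" by (simp add: algebra_simps)
    moreover have "a*s + 2*b \<le> 3*s^2/4"
    proof -
      have h1: "s*s \<ge> s*(4*a + 4*b + 4)" using s1 s0 by (intro mult_left_mono) auto
      have h2: "s*(4*a + 4*b + 4) = 4*(a*s) + 4*(b*s) + 4*s" by (simp add: algebra_simps)
      have s1': "s \<ge> 1" using s1 a0 b0 by linarith
      have h3: "b*1 \<le> b*s" using s1' b0 by (intro mult_left_mono) auto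
      have h4: "a*s \<ge> 0" using a0 s0 by simp
      have h5: "s^2 = s*s" by (simp add: power2_eq_square)
      show ?thesis using h1 h2 h3 h4 h5 b0 s1' by linarith
    qed
    ultimately show False using A Pup wc2 by linarith
  qed
  have rup: "r \<le> 2*s"
  proof (rule ccontr)
    assume "\<not> r \<le> 2*s"
    then have rl: "r > 2*s" by simp
    have "r^2 = cmod (w^2)" unfolding r_def by (simp add: norm_power)
    also have "\<dots> \<le> cmod (w^2 - c^2) + cmod (c^2)" using norm_triangle_ineq[of "w^2 - c^2" "c^2"] by simp
    finally have "r^2 - s^2 \<le> cmod (w^2 - c^2)" using cs by (simp add: norm_power)
    moreover have "s^2 < r^2/4"
    proof -
      have "(2*s)^2 < r^2" using rl s0 by (intro power_strict_mono) auto
      then show ?thesis by (simp add: power_mult_distrib)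
    qed
    ultimately have A: "3*r^2/4 < cmod (w^2 - c^2)" by linarith
    have "2*a*r + 2*b \<le> 3*r^2/4"
    proof -
      have r8: "r \<ge> 8*a + 8*b + 8" using rl s1 by linarith
      have h1: "r*r \<ge> r*(8*a + 8*b + 8)" using r8 r0 by (intro mult_left_mono) auto
      have h2: "r*(8*a + 8*b + 8) = 8*(a*r) + 8*(b*r) + 8*r" by (simp add: algebra_simps)
      have h3: "b*1 \<le> b*r" using r8 b0 a0 by (intro mult_left_mono) auto
      have h4: "a*r \<ge> 0" using a0 r0 by simp
      have h5: "r^2 = r*r" by (simp add: power2_eq_square)
      have h6: "2*a*r = 2*(a*r)" by simp
      show ?thesis using h1 h2 h3 h4 h5 h6 b0 r8 a0 by linarith
    qed
    then show False using A Pup wc2 by linarith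
  qed
  define m where "m = min (cmod (w - c)) (cmod (w + c))"
  have m1: "cmod (w - c) \<le> 3*s" using norm_triangle_ineq4[of w c] cs rup unfolding r_def by linarith
  have m2: "cmod (w + c) \<le> 3*s" using norm_triangle_ineq[of w c] cs rup unfolding r_def by linarith
  have m0: "m \<ge> 0" unfolding m_def by simp
  have "2*a*r - 2*b \<le> cmod (w - c) * cmod (w + c)" using Plo by (simp add: norm_mult)
  also have "\<dots> \<le> m * (3*s)"
  proof (cases "cmod (w - c) \<le> cmod (w + c)")
    case True
    then have "m = cmod (w - c)" unfolding m_def by simp
    then show ?thesis using mult_left_mono[OF m2, of "cmod (w - c)"] by simp
  next
    case False
    then have "m = cmod (w + c)" unfolding m_def by simp
    then show ?thesis using mult_left_mono[OF m1, of "cmod (w + c)"] by (simp add: mult.commute)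
  qed
  finally have Pm0: "2*a*r - 2*b \<le> m * (3 * s)" .
  have Pm: "2*a*r - 2*b \<le> 3 * (s * m)" using Pm0 by (simp add: mult_ac)
  have "a*(2*r) \<ge> a*s" using rlo a0 by (intro mult_left_mono) auto
  then have "2*a*r \<ge> a*s" by (simp add: algebra_simps)
  then have sm: "s * m \<ge> \<Gamma>" using Pm sG by linarith
  have RT: "R_T n \<alpha> f \<ge> m"
  proof -
    have "Min ((\<lambda>x. cmod (w - x)) ` zeros f) = m" unfolding zf m_def by simp
    moreover have "Min ((\<lambda>x. cmod (w - x)) ` zeros f) \<le> R_T n \<alpha> f"
      unfolding R_T_def using w Top_props(2)[OF deg1] by (intro Max_ge) auto
    ultimately show ?thesis by simp
  qed
  have "\<Gamma> \<le> tau f * R_T n \<alpha> f" unfolding tau using sm mult_left_mono[OF RT, of s] s0 by linarith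
  then show ?thesis using degf n2 sqf by (intro exI[of _ f]) simp
qed


theorem theorem3p1:
  fixes n :: nat and \<alpha> :: "nat \<Rightarrow> complex"
  assumes "n \<ge> 2"
  shows "\<alpha> 1 = 0 \<longleftrightarrow>
    (\<exists>\<Gamma>>0. \<forall>f :: complex poly. degree f \<le> n \<and> degree f \<ge> 2 \<and> rsquarefree f \<longrightarrow>
        tau f * R_T n \<alpha> f < \<Gamma>)"
proof
  assume a1: "\<alpha> 1 = 0"
  define A where "A = (\<Sum>k=1..n. cmod (\<alpha> k) * real n ^ k)"
  define B where "B = (\<Sum>k=1..n. cmod (\<alpha> k) * (2 * real n) ^ (k - 1))"
  define D0 where "D0 = max 1 A"
  define G where "G = 2 * D0^2 + D0 + real n * B"
  have B0: "B \<ge> 0" unfolding B_def by (intro sum_nonneg) auto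
  have G0: "G \<ge> 0" unfolding G_def D0_def using B0 by (simp add: add_nonneg_nonneg)
  show "\<exists>\<Gamma>>0. \<forall>f :: complex poly. degree f \<le> n \<and> degree f \<ge> 2 \<and> rsquarefree f \<longrightarrow>
        tau f * R_T n \<alpha> f < \<Gamma>"
  proof (intro exI[of _ "G + 1"] conjI allI impI)
    show "G + 1 > 0" using G0 by simp
    fix f :: "complex poly"
    assume H: "degree f \<le> n \<and> degree f \<ge> 2 \<and> rsquarefree f"
    have deg1: "degree f \<ge> 1" using H by simp
    let ?g = "\<lambda>w. Min ((\<lambda>x. cmod (w - x)) ` zeros f)"
    have "R_T n \<alpha> f \<in> ?g ` zeros (Top n \<alpha> f)"
      unfolding R_T_def using Top_props[OF deg1] by (intro Max_in) auto
    then obtain w where w: "w \<in> zeros (Top n \<alpha> f)" and R: "R_T n \<alpha> f = ?g w" by blast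
    have fz: "finite (zeros f)" "zeros f \<noteq> {}" using zeros_props[OF deg1] by auto
    have "?g w \<in> (\<lambda>x. cmod (w - x)) ` zeros f" using fz by (intro Min_in) auto
    then obtain x0 where x0: "x0 \<in> zeros f" and gx: "?g w = cmod (w - x0)" by blast
    have x0min: "\<And>x. poly f x = 0 \<Longrightarrow> cmod (w - x0) \<le> cmod (w - x)"
    proof -
      fix x assume "poly f x = 0"
      then have "cmod (w - x) \<in> (\<lambda>x. cmod (w - x)) ` zeros f" unfolding zeros_def by auto
      then show "cmod (w - x0) \<le> cmod (w - x)" using Min_le[OF finite_imageI[OF fz(1)]] gx by metis
    qed
    have "tau f * cmod (w - x0) \<le> G"
      unfolding G_def D0_def A_def B_def
      by (rule core_bound[where \<alpha>=\<alpha> and n=n, OF a1]) (use H w x0 x0min in \<open>auto simp: zeros_def\<close>)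
    then show "tau f * R_T n \<alpha> f < G + 1" using R gx by simp
  qed
next
  assume E: "\<exists>\<Gamma>>0. \<forall>f :: complex poly. degree f \<le> n \<and> degree f \<ge> 2 \<and> rsquarefree f \<longrightarrow>
        tau f * R_T n \<alpha> f < \<Gamma>"
  show "\<alpha> 1 = 0"
  proof (rule ccontr)
    assume "\<alpha> 1 \<noteq> 0"
    from E obtain \<Gamma> where G: "\<Gamma> > 0" and all: "\<forall>f :: complex poly. degree f \<le> n \<and> degree f \<ge> 2 \<and> rsquarefree f \<longrightarrow>
        tau f * R_T n \<alpha> f < \<Gamma>" by blast
    from counter[where \<alpha>=\<alpha> and n=n, OF \<open>\<alpha> 1 \<noteq> 0\<close> assms G] obtain f :: "complex poly" where
      "degree f \<le> n" "degree f \<ge> 2" "rsquarefree f" "\<Gamma> \<le> tau f * R_T n \<alpha> f" by blast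
    with all show False by force
  qed
qed

end
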